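(* Let $\alpha,\beta\ge1$. For every $p\in\mathcal{P}_{\alpha,\beta}$, the total degree of $\pi(p)\in k[\mathbf{x}]$ equals $\deg(f_{[n]})\,\alpha+\beta$, and in particular is at least $3$.
   Context: Let $k$ be a field of characteristic zero, $n\ge3$, $k[\mathbf{x}]=k[x_1,\ldots,x_n]$, $k[t,\mathbf{x}]=k[t,x_1,\ldots,x_n]$. $D=\sum_{j=1}^{n-1}(n-j)\,x_{j+1}\,\partial/\partial x_j$. $f_{[2m-1]}=\frac12\sum_{i=1}^{2m-1}(-1)^{i-1}\binom{2m-2}{i-1}x_ix_{2m-i}$ for $n=2m-1$, $m\ge2$; $f_{[2m]}=D(f_{[2m-1]})^2-2D^2(f_{[2m-1]})f_{[2m-1]}$ for $n=2m$, $m\ge2$ (a nonzero homogeneous polynomial of degree $2$ resp. $4$). $\pi:k[t,\mathbf{x}]\to k[\mathbf{x}]$ is the $k[\mathbf{x}]$-algebra map with $t\mapsto f_{[n]}$. For nonzero $p$, $\mathrm{supp}(p)$ is the set of exponent vectors $(i_0,\ldots,i_n)$ of monomials $t^{i_0}x_1^{i_1}\cdots x_n^{i_n}$ with nonzero coefficient, $\deg_{\mathbf w}(p)=\max\{\sum_j i_jw_j:(i_0,\ldots,i_n)\in\mathrm{supp}(p)\}$, and $\mathrm{lt}(p)$ is the leading term for the lexicographic order with $t>x_1>\cdots>x_n$. With $\mathbf{w}_1=(1,\ldots,1)$ and $\mathbf{w}_2$ the weight with $n-2$ on $t$ and $2n-j-1$ on $x_j$, $\mathcal{P}_{\alpha,\beta}$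 is the set of nonzero $p\in k[t,\mathbf{x}]$ with $\deg_{\mathbf{w}_1}(p)\le\alpha+\beta$, $\deg_{\mathbf{w}_2}(p)\le(n-2)\alpha+(n-1)\beta$ and $\mathrm{lt}(p)\in k^*t^\alpha x_n^\beta$. *)

theory Defs
  imports Main "HOL-Library.Poly_Mapping"
begin

text \<open>Multivariate polynomials over a field as finitely supported maps from
monomials (exponent vectors) to coefficients.
Variable index 0 is t, variable index j (1 \<le> j \<le> n) is x_j.\<close>

type_synonym 'a mpoly = "(nat \<Rightarrow>\<^sub>0 nat) \<Rightarrow>\<^sub>0 'a"

definition mconst :: "'a::comm_ring_1 \<Rightarrow> 'a mpoly" where
  "mconst c = Poly_Mapping.single 0 c"

definition mvar :: "nat \<Rightarrow> 'a::comm_ring_1 mpoly" where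
  "mvar i = Poly_Mapping.single (Poly_Mapping.single i 1) 1"

definition vars_in :: "nat set \<Rightarrow> 'a::comm_ring_1 mpoly \<Rightarrow> bool" where
  "vars_in V p \<longleftrightarrow> (\<forall>m\<in>Poly_Mapping.keys p. Poly_Mapping.keys m \<subseteq> V)"

definition pdiff :: "nat \<Rightarrow> 'a::comm_ring_1 mpoly \<Rightarrow> 'a mpoly" where
  "pdiff i p = (\<Sum>m\<in>Poly_Mapping.keys p. Poly_Mapping.single (m - Poly_Mapping.single i 1)
                                (of_nat (Poly_Mapping.lookup m i) * Poly_Mapping.lookup p m))"

definition Dder :: "nat \<Rightarrow> 'a::comm_ring_1 mpoly \<Rightarrow> 'a mpoly" where
  "Dder n p = (\<Sum>j=1..n-1. mconst (of_nat (n - j)) * mvar (j+1) * pdiff j p)"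

definition f_odd :: "nat \<Rightarrow> 'a::field_char_0 mpoly" where
  "f_odd N = mconst (1/2) *
     (\<Sum>i=1..N. mconst ((-1)^(i-1) * of_nat ((N-1) choose (i-1))) * mvar i * mvar (N + 1 - i))"

definition fpoly :: "nat \<Rightarrow> 'a::field_char_0 mpoly" where
  "fpoly n = (if odd n then f_odd n
              else Dder n (f_odd (n-1)) ^ 2 - 2 * Dder n (Dder n (f_odd (n-1))) * f_odd (n-1))"

text \<open>pi: k[x]-algebra map k[t,x] \<rightarrow> k[x] with t \<mapsto> q (t is variable 0)\<close>
definition subst_t :: "'a::comm_ring_1 mpoly \<Rightarrow> 'a mpoly \<Rightarrow> 'a mpoly" where
  "subst_t q p = (\<Sum>m\<in>Poly_Mapping.keys p. mconst (Poly_Mapping.lookup p m) * q ^ (Poly_Mapping.lookup m 0) *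
                     Poly_Mapping.single (m - Poly_Mapping.single 0 (Poly_Mapping.lookup m 0)) 1)"

text \<open>weighted degree (for nonzero p): max over the support of sum_j i_j w_j\<close>
definition wdeg :: "(nat \<Rightarrow> nat) \<Rightarrow> 'a::comm_ring_1 mpoly \<Rightarrow> nat" where
  "wdeg w p = Max ((\<lambda>m. \<Sum>j\<in>Poly_Mapping.keys m. Poly_Mapping.lookup m j * w j) ` Poly_Mapping.keys p)"

definition tdeg :: "'a::comm_ring_1 mpoly \<Rightarrow> nat" where
  "tdeg p = wdeg (\<lambda>_. 1) p"

definition lex_less :: "(nat \<Rightarrow>\<^sub>0 nat) \<Rightarrow> (nat \<Rightarrow>\<^sub>0 nat) \<Rightarrow> bool" where
  "lex_less m1 m2 \<longleftrightarrow> (\<exists>i. (\<forall>j<i. Poly_Mapping.lookup m1 j = Poly_Mapping.lookup m2 j) \<and> Poly_Mapping.lookup m1 i < Poly_Mapping.lookup m2 i)"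

definition lead_mon :: "'a::comm_ring_1 mpoly \<Rightarrow> (nat \<Rightarrow>\<^sub>0 nat)" where
  "lead_mon p = (THE m. m \<in> Poly_Mapping.keys p \<and> (\<forall>m'\<in>Poly_Mapping.keys p. m' \<noteq> m \<longrightarrow> lex_less m' m))"

definition w2 :: "nat \<Rightarrow> nat \<Rightarrow> nat" where
  "w2 n j = (if j = 0 then n - 2 else 2*n - j - 1)"

definition Pset :: "nat \<Rightarrow> nat \<Rightarrow> nat \<Rightarrow> 'a::field_char_0 mpoly set" where
  "Pset n \<alpha> \<beta> = {p. vars_in {0..n} p \<and> p \<noteq> 0 \<and>
      tdeg p \<le> \<alpha> + \<beta> \<and>
      wdeg (w2 n) p \<le> (n-2)*\<alpha> + (n-1)*\<beta> \<and>
      lead_mon p = Poly_Mapping.single 0 \<alpha> + Poly_Mapping.single n \<beta>}"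

end

theory Submission
  imports Defs "HOL-Computational_Algebra.Polynomial"
begin


definition H :: "((nat \<Rightarrow>\<^sub>0 nat) \<Rightarrow> 'a \<Rightarrow> 'b) \<Rightarrow> 'a::comm_ring_1 mpoly \<Rightarrow> 'b::comm_ring_1" where
  "H f p = (\<Sum>m\<in>Poly_Mapping.keys p. f m (Poly_Mapping.lookup p m))"

lemma mpoly_expand: "p = (\<Sum>m\<in>Poly_Mapping.keys p. Poly_Mapping.single m (Poly_Mapping.lookup p m))"
proof (rule poly_mapping_eqI)
  fix k
  have "(\<Sum>m\<in>Poly_Mapping.keys p. Poly_Mapping.lookup (Poly_Mapping.single m (Poly_Mapping.lookup p m)) k)
      = (\<Sum>m\<in>Poly_Mapping.keys p. if m = k then Poly_Mapping.lookup p k else 0)"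
    by (rule sum.cong) (auto simp: lookup_single when_def)
  also have "\<dots> = Poly_Mapping.lookup p k"
    by (auto simp: in_keys_iff)
  finally show "Poly_Mapping.lookup p k = Poly_Mapping.lookup (\<Sum>m\<in>Poly_Mapping.keys p. Poly_Mapping.single m (Poly_Mapping.lookup p m)) k"
    by (simp add: lookup_sum)
qed

locale hf =
  fixes f :: "(nat \<Rightarrow>\<^sub>0 nat) \<Rightarrow> 'a::comm_ring_1 \<Rightarrow> 'b::comm_ring_1"
  assumes f0: "f m 0 = 0" and fadd: "f m (a + b) = f m a + f m b"
begin

lemma H_add: "H f (p + q) = H f p + H f q"
  unfolding H_def by (rule setsum_keys_plus_distrib) (auto simp: f0 fadd)

lemma H_zero[simp]: "H f 0 = 0" by (simp add: H_def)

lemma H_single[simp]: "H f (Poly_Mapping.single m c) = f m c"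
  by (cases "c = 0") (auto simp: H_def f0)

lemma H_sum: "H f (sum g S) = (\<Sum>i\<in>S. H f (g i))"
  by (induction S rule: infinite_finite_induct) (auto simp: H_add)

lemma H_uminus: "H f (- p) = - H f p"
proof -
  have "H f (p + - p) = 0" by simp
  then have "H f p + H f (- p) = 0" by (simp only: H_add)
  then show ?thesis by (metis neg_eq_iff_add_eq_0)
qed

lemma H_diff: "H f (p - q) = H f p - H f q"
  using H_add[of p "-q"] by (simp add: H_uminus)

end

locale hfm = hf +
  assumes fmul: "f (m + m') (a * b) = f m a * f m' b" and f1: "f 0 1 = 1"
begin

lemma H_one[simp]: "H f 1 = 1"
  using H_single[of 0 1] by (simp add: f1 del: H_single)

lemma H_mult: "H f (p * q) = H f p * H f q"
proof -
  have "p * q = (\<Sum>m\<in>Poly_Mapping.keys p. Poly_Mapping.single m (Poly_Mapping.lookup p m)) *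
     (\<Sum>m'\<in>Poly_Mapping.keys q. Poly_Mapping.single m' (Poly_Mapping.lookup q m'))"
    using mpoly_expand[of p] mpoly_expand[of q] by simp
  also have "\<dots> = (\<Sum>m\<in>Poly_Mapping.keys p. \<Sum>m'\<in>Poly_Mapping.keys q.
       Poly_Mapping.single (m + m') (Poly_Mapping.lookup p m * Poly_Mapping.lookup q m'))"
    by (simp add: sum_product mult_single)
  finally have "H f (p * q) = (\<Sum>m\<in>Poly_Mapping.keys p. \<Sum>m'\<in>Poly_Mapping.keys q.
       f m (Poly_Mapping.lookup p m) * f m' (Poly_Mapping.lookup q m'))"
    by (simp add: H_sum fmul)
  also have "\<dots> = H f p * H f q" by (simp add: H_def sum_product)
  finally show ?thesis .
qed

lemma H_power: "H f (p ^ k) = H f p ^ k"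
  by (induction k) (auto simp: H_mult)

end

definition mon :: "(nat \<Rightarrow> 'a::comm_ring_1) \<Rightarrow> (nat \<Rightarrow>\<^sub>0 nat) \<Rightarrow> 'a" where
  "mon v m = (\<Prod>j\<in>Poly_Mapping.keys m. v j ^ Poly_Mapping.lookup m j)"

lemma mon_superset: "finite S \<Longrightarrow> Poly_Mapping.keys m \<subseteq> S \<Longrightarrow> mon v m = (\<Prod>j\<in>S. v j ^ Poly_Mapping.lookup m j)"
  unfolding mon_def by (rule prod.mono_neutral_left) (auto simp: in_keys_iff)

lemma mon_add: "mon v (m + m') = mon v m * mon v m'"
proof -
  let ?S = "Poly_Mapping.keys m \<union> Poly_Mapping.keys m'"
  have "Poly_Mapping.keys (m + m') \<subseteq> ?S" by (rule keys_add)
  then show ?thesis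
    by (simp add: mon_superset[of ?S] lookup_add power_add prod.distrib)
qed

lemma mon_zero[simp]: "mon v 0 = 1" by (simp add: mon_def)

lemma mon_single[simp]: "mon v (Poly_Mapping.single i k) = v i ^ k"
  by (cases "k = 0") (auto simp: mon_def)

definition deg :: "(nat \<Rightarrow>\<^sub>0 nat) \<Rightarrow> nat" where
  "deg m = (\<Sum>j\<in>Poly_Mapping.keys m. Poly_Mapping.lookup m j)"

lemma deg_superset: "finite S \<Longrightarrow> Poly_Mapping.keys m \<subseteq> S \<Longrightarrow> deg m = (\<Sum>j\<in>S. Poly_Mapping.lookup m j)"
  unfolding deg_def by (rule sum.mono_neutral_left) (auto simp: in_keys_iff)

lemma deg_add: "deg (m + m') = deg m + deg m'"
proof -
  let ?S = "Poly_Mapping.keys m \<union> Poly_Mapping.keys m'"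
  have "Poly_Mapping.keys (m + m') \<subseteq> ?S" by (rule keys_add)
  then show ?thesis
    by (simp add: deg_superset[of ?S] lookup_add sum.distrib)
qed

lemma deg_zero[simp]: "deg 0 = 0" by (simp add: deg_def)

lemma deg_single[simp]: "deg (Poly_Mapping.single i k) = k"
  by (cases "k = 0") (auto simp: deg_def)

definition ev :: "(nat \<Rightarrow> 'a::comm_ring_1) \<Rightarrow> 'a mpoly \<Rightarrow> 'a" where
  "ev v = H (\<lambda>m c. c * mon v m)"

interpretation ev: hfm "\<lambda>m c. c * mon v m"
  by unfold_locales (auto simp: algebra_simps mon_add)

definition Phi :: "'a::comm_ring_1 mpoly \<Rightarrow> 'a mpoly poly" where
  "Phi = H (\<lambda>m c. monom (Poly_Mapping.single m c) (deg m))"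

interpretation Phi: hfm "\<lambda>m c. monom (Poly_Mapping.single m c) (deg m)"
  by unfold_locales (auto simp: single_add add_monom mult_monom mult_single deg_add)


lemma ev_add[simp]: "ev v (p + q) = ev v p + ev v q" unfolding ev_def by (rule ev.H_add)
lemma ev_diff[simp]: "ev v (p - q) = ev v p - ev v q" unfolding ev_def by (rule ev.H_diff)
lemma ev_mult[simp]: "ev v (p * q) = ev v p * ev v q" unfolding ev_def by (rule ev.H_mult)
lemma ev_power[simp]: "ev v (p ^ k) = ev v p ^ k" unfolding ev_def by (rule ev.H_power)
lemma ev_sum[simp]: "ev v (sum g S) = (\<Sum>i\<in>S. ev v (g i))" unfolding ev_def by (rule ev.H_sum)
lemma ev_single[simp]: "ev v (Poly_Mapping.single m c) = c * mon v m" unfolding ev_def by (rule ev.H_single)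
lemma ev_one[simp]: "ev v 1 = 1" unfolding ev_def by (rule ev.H_one)
lemma ev_zero[simp]: "ev v 0 = 0" unfolding ev_def by (rule ev.H_zero)
lemma ev_of_nat[simp]: "ev v (of_nat k) = of_nat k"
  by (induction k) simp_all
lemma ev_numeral[simp]: "ev v (numeral k) = numeral k"
  using ev_of_nat[of v "numeral k"] by (simp only: of_nat_numeral)
lemma ev_mconst[simp]: "ev v (mconst c) = c" by (simp add: mconst_def)
lemma ev_mvar[simp]: "ev v (mvar i) = v i" by (simp add: mvar_def)

lemma Phi_add[simp]: "Phi (p + q) = Phi p + Phi q" unfolding Phi_def by (rule Phi.H_add)
lemma Phi_mult[simp]: "Phi (p * q) = Phi p * Phi q" unfolding Phi_def by (rule Phi.H_mult)
lemma Phi_power[simp]: "Phi (p ^ k) = Phi p ^ k" unfolding Phi_def by (rule Phi.H_power)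
lemma Phi_sum[simp]: "Phi (sum g S) = (\<Sum>i\<in>S. Phi (g i))" unfolding Phi_def by (rule Phi.H_sum)
lemma Phi_single[simp]: "Phi (Poly_Mapping.single m c) = monom (Poly_Mapping.single m c) (deg m)"
  unfolding Phi_def by (rule Phi.H_single)
lemma Phi_mconst[simp]: "Phi (mconst c) = monom (mconst c) 0" by (simp add: mconst_def)

lemma lookup_coeff_Phi:
  "Poly_Mapping.lookup (coeff (Phi p) k) m0 = (if deg m0 = k then Poly_Mapping.lookup p m0 else 0)"
proof -
  have "Phi p = (\<Sum>m\<in>Poly_Mapping.keys p. monom (Poly_Mapping.single m (Poly_Mapping.lookup p m)) (deg m))"
    by (simp add: Phi_def H_def)
  then have "Poly_Mapping.lookup (coeff (Phi p) k) m0 =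
     (\<Sum>m\<in>Poly_Mapping.keys p. if deg m = k \<and> m = m0 then Poly_Mapping.lookup p m else 0)"
    by (simp add: coeff_sum lookup_sum) (rule sum.cong, auto simp: lookup_single when_def)
  also have "\<dots> = (\<Sum>m\<in>Poly_Mapping.keys p. if m0 = m then (if deg m0 = k then Poly_Mapping.lookup p m0 else 0) else 0)"
    by (rule sum.cong) auto
  also have "\<dots> = (if deg m0 = k then Poly_Mapping.lookup p m0 else 0)"
    by (auto simp: in_keys_iff)
  finally show ?thesis .
qed

lemma Phi_eq_0_iff[simp]: "Phi p = 0 \<longleftrightarrow> p = 0"
proof
  assume "Phi p = 0"
  then have "Poly_Mapping.lookup p m = 0" for m
    using lookup_coeff_Phi[of p "deg m" m] by simp
  then show "p = 0" by (intro poly_mapping_eqI) simp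
qed (simp add: Phi_def)

lemma tdeg_eq: "tdeg p = Max (deg ` Poly_Mapping.keys p)"
  by (simp add: tdeg_def wdeg_def deg_def)

lemma degree_Phi: "p \<noteq> 0 \<Longrightarrow> degree (Phi p) = tdeg p"
proof -
  assume p: "p \<noteq> 0"
  then have ne: "Poly_Mapping.keys p \<noteq> {}" by simp
  have "tdeg p \<in> deg ` Poly_Mapping.keys p"
    unfolding tdeg_eq using ne by (intro Max_in) auto
  then obtain m0 where m0: "m0 \<in> Poly_Mapping.keys p" "deg m0 = tdeg p" by auto
  have "coeff (Phi p) (tdeg p) \<noteq> 0"
  proof
    assume "coeff (Phi p) (tdeg p) = 0"
    then have "Poly_Mapping.lookup (coeff (Phi p) (tdeg p)) m0 = 0" by simp
    with m0 show False by (simp add: lookup_coeff_Phi in_keys_iff)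
  qed
  then have "tdeg p \<le> degree (Phi p)" by (rule le_degree)
  moreover have "degree (Phi p) \<le> tdeg p"
  proof (rule degree_le, intro allI impI)
    fix k assume k: "tdeg p < k"
    show "coeff (Phi p) k = 0"
    proof (rule poly_mapping_eqI)
      fix m
      show "Poly_Mapping.lookup (coeff (Phi p) k) m = Poly_Mapping.lookup 0 m"
      proof (cases "m \<in> Poly_Mapping.keys p")
        case True
        then have "deg m \<le> tdeg p" by (simp add: tdeg_eq)
        then show ?thesis using k by (simp add: lookup_coeff_Phi)
      qed (simp add: lookup_coeff_Phi in_keys_iff)
    qed
  qed
  ultimately show ?thesis by simp
qed



definition homog :: "nat \<Rightarrow> 'a::comm_ring_1 mpoly \<Rightarrow> bool" where
  "homog k p \<longleftrightarrow> (\<forall>m\<in>Poly_Mapping.keys p. deg m = k)"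

lemma homog_add: "homog k p \<Longrightarrow> homog k q \<Longrightarrow> homog k (p + q)"
  using keys_add[of p q] by (auto simp: homog_def)

lemma homog_diff: "homog k p \<Longrightarrow> homog k q \<Longrightarrow> homog k (p - q)"
  using keys_diff[of p q] by (auto simp: homog_def)

lemma homog_mult: "homog k p \<Longrightarrow> homog l q \<Longrightarrow> homog (k + l) (p * q)"
  using keys_mult[of p q] by (auto simp: homog_def deg_add)

lemma homog_sum: "(\<And>i. i \<in> S \<Longrightarrow> homog k (g i)) \<Longrightarrow> homog k (sum g S)"
  using keys_sum[of g S] by (auto simp: homog_def)

lemma homog_cong: "homog k p \<Longrightarrow> k = l \<Longrightarrow> homog l p" by simp

lemma homog_mconst: "homog 0 (mconst c)" by (simp add: homog_def mconst_def)
lemma homog_mvar: "homog 1 (mvar i)" by (simp add: homog_def mvar_def)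
lemma homog_numeral: "homog 0 (numeral c :: 'a::comm_ring_1 mpoly)"
  by (simp add: homog_def flip: single_numeral)

lemma minus_plus_single:
  fixes m :: "nat \<Rightarrow>\<^sub>0 nat"
  assumes "Poly_Mapping.lookup m i \<noteq> 0"
  shows "m - Poly_Mapping.single i 1 + Poly_Mapping.single i 1 = m"
proof (rule poly_mapping_eqI)
  fix k
  show "Poly_Mapping.lookup (m - Poly_Mapping.single i 1 + Poly_Mapping.single i 1) k = Poly_Mapping.lookup m k"
    using assms by (cases "k = i") (simp_all add: lookup_add lookup_minus lookup_single)
qed

lemma deg_minus_single:
  fixes m :: "nat \<Rightarrow>\<^sub>0 nat"
  assumes "Poly_Mapping.lookup m i \<noteq> 0"
  shows "deg (m - Poly_Mapping.single i 1) = deg m - 1"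
  using deg_add[of "m - Poly_Mapping.single i 1" "Poly_Mapping.single i 1"] minus_plus_single[OF assms]
  by simp

lemma homog_pdiff: "homog k p \<Longrightarrow> homog (k - 1) (pdiff i p)"
proof -
  assume h: "homog k p"
  show ?thesis
    unfolding homog_def
  proof
    fix m' assume "m' \<in> Poly_Mapping.keys (pdiff i p)"
    then have "m' \<in> (\<Union>m\<in>Poly_Mapping.keys p. Poly_Mapping.keys (Poly_Mapping.single (m - Poly_Mapping.single i 1)
          (of_nat (Poly_Mapping.lookup m i) * Poly_Mapping.lookup p m :: 'a)))"
      unfolding pdiff_def by (rule subsetD[OF keys_sum])
    then obtain m where m: "m \<in> Poly_Mapping.keys p"
      "m' \<in> Poly_Mapping.keys (Poly_Mapping.single (m - Poly_Mapping.single i 1)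
          (of_nat (Poly_Mapping.lookup m i) * Poly_Mapping.lookup p m :: 'a))"
      by (rule UN_E)
    then have c: "(of_nat (Poly_Mapping.lookup m i) * Poly_Mapping.lookup p m :: 'a) \<noteq> 0"
      and e: "m' = m - Poly_Mapping.single i 1"
      by (simp_all split: if_splits)
    from c have "Poly_Mapping.lookup m i \<noteq> 0" by (cases "Poly_Mapping.lookup m i = 0") simp_all
    note nz = this
    have "deg m = k" using h m(1) unfolding homog_def by blast
    then show "deg m' = k - 1" unfolding e deg_minus_single[OF nz] by simp
  qed
qed

lemma homog_Dder: "homog k p \<Longrightarrow> k \<ge> 1 \<Longrightarrow> homog k (Dder n p)"
  unfolding Dder_def
proof (rule homog_sum)
  fix j assume "homog k p" "k \<ge> 1"
  then have "homog (0 + 1 + (k - 1)) (mconst (of_nat (n - j)) * mvar (j + 1) * pdiff j p)"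
    by (intro homog_mult homog_mconst homog_mvar homog_pdiff)
  then show "homog k (mconst (of_nat (n - j)) * mvar (j + 1) * pdiff j p)"
    using \<open>k \<ge> 1\<close> by simp
qed

lemma homog_f_odd: "homog 2 (f_odd N)"
proof -
  have t: "homog 2 (mconst c * mvar i * mvar j)" for c i j
    by (rule homog_cong[OF homog_mult[OF homog_mult[OF homog_mconst homog_mvar] homog_mvar, of c i j]]) simp
  have "homog (0+2) (f_odd N)"
    unfolding f_odd_def by (intro homog_mult homog_mconst homog_sum t)
  then show ?thesis by (rule homog_cong) simp
qed

lemma homog_fpoly: "homog (if odd n then 2 else 4) (fpoly n)"
proof (cases "odd n")
  case True
  have fp: "fpoly n = f_odd n" unfolding fpoly_def by (rule if_P[OF True])
  show ?thesis unfolding fp if_P[OF True] by (rule homog_f_odd)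
next
  case False
  have g: "homog 2 (f_odd (n-1))" by (rule homog_f_odd)
  have d1: "homog 2 (Dder n (f_odd (n-1)))" by (rule homog_Dder[OF g]) simp
  have d2: "homog 2 (Dder n (Dder n (f_odd (n-1))))" by (rule homog_Dder[OF d1]) simp
  have A: "homog 4 (Dder n (f_odd (n - 1)) ^ 2)"
    unfolding power2_eq_square by (rule homog_cong[OF homog_mult[OF d1 d1]]) simp
  have "homog (0+2+2) (2 * Dder n (Dder n (f_odd (n - 1))) * f_odd (n - 1))"
    by (intro homog_mult homog_numeral d2 g)
  then have B: "homog 4 (2 * Dder n (Dder n (f_odd (n - 1))) * f_odd (n - 1))"
    by (rule homog_cong) simp
  have fp: "fpoly n = Dder n (f_odd (n - 1)) ^ 2 - 2 * Dder n (Dder n (f_odd (n - 1))) * f_odd (n - 1)"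
    unfolding fpoly_def by (rule if_not_P[OF False])
  show ?thesis unfolding fp if_not_P[OF False] by (rule homog_diff[OF A B])
qed

lemma tdeg_homog: "homog k p \<Longrightarrow> p \<noteq> 0 \<Longrightarrow> tdeg p = k"
proof -
  assume "homog k p" "p \<noteq> 0"
  moreover obtain m where "m \<in> Poly_Mapping.keys p" using \<open>p \<noteq> 0\<close> by fastforce
  ultimately have "deg ` Poly_Mapping.keys p = {k}" unfolding homog_def by force
  then show ?thesis by (simp add: tdeg_eq)
qed



lemma sum_two_ends:
  fixes h :: "nat \<Rightarrow> 'a::comm_monoid_add"
  assumes "1 < N" "\<And>i. 1 < i \<Longrightarrow> i < N \<Longrightarrow> h i = 0"
  shows "(\<Sum>i=1..N. h i) = h 1 + h N"
proof -
  have "(\<Sum>i=1..N. h i) = (\<Sum>i\<in>{1,N}. h i)"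
    using assms by (intro sum.mono_neutral_right) auto
  then show ?thesis using assms(1) by simp
qed

lemma mconst_mvar_mvar:
  "mconst a * mconst b * mvar i * mvar k =
   Poly_Mapping.single (Poly_Mapping.single i 1 + Poly_Mapping.single k 1) (a * b)"
  by (simp add: mconst_def mvar_def mult_single)

lemma f_odd_sum: "f_odd N = (\<Sum>i=1..N. Poly_Mapping.single (Poly_Mapping.single i 1 + Poly_Mapping.single (N + 1 - i) 1)
      (1/2 * ((-1)^(i-1) * of_nat ((N-1) choose (i-1)))))"
  unfolding f_odd_def sum_distrib_left
  by (rule sum.cong) (simp_all add: mconst_mvar_mvar flip: mult.assoc)

definition vv :: "nat \<Rightarrow> nat \<Rightarrow> 'a::field_char_0" where
  "vv n j = (if j = 1 \<or> j = n then 1 else 0)"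

lemma ev_f_odd_odd:
  assumes "odd n" "n \<ge> 3"
  shows "ev (vv n) (f_odd n) = (1 :: 'a::field_char_0)"
proof -
  have "ev (vv n) (f_odd n :: 'a mpoly) = 1/2 * (\<Sum>i=1..n. (-1)^(i-1) * of_nat ((n-1) choose (i-1)) * vv n i * vv n (n + 1 - i))"
    by (simp add: f_odd_def sum_distrib_left mult.assoc)
  also have "(\<Sum>i=1..n. (-1)^(i-1) * of_nat ((n-1) choose (i-1)) * vv n i * vv n (n + 1 - i)) = (1 + 1 :: 'a)"
    using assms by (subst sum_two_ends) (auto simp: vv_def)
  finally show ?thesis by simp
qed

definition Epd :: "(nat \<Rightarrow> 'a) \<Rightarrow> nat \<Rightarrow> (nat \<Rightarrow>\<^sub>0 nat) \<Rightarrow> 'a::comm_ring_1 \<Rightarrow> 'a" where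
  "Epd v j m c = of_nat (Poly_Mapping.lookup m j) * c * mon v (m - Poly_Mapping.single j 1)"

interpretation Epd: hf "Epd v j"
  by unfold_locales (auto simp: Epd_def algebra_simps)

lemma ev_pdiff: "ev v (pdiff j p) = H (Epd v j) p"
  by (simp add: pdiff_def H_def Epd_def)

lemma ev_g:
  assumes "even n" "n \<ge> 3"
  shows "ev (vv n) (f_odd (n-1)) = (0 :: 'a::field_char_0)"
proof -
  have "ev (vv n) (f_odd (n-1) :: 'a mpoly) = 1/2 * (\<Sum>i=1..n-1. (-1)^(i-1) * of_nat ((n-1-1) choose (i-1)) * vv n i * vv n (n - 1 + 1 - i))"
    by (simp add: f_odd_def sum_distrib_left mult.assoc)
  also have "(\<Sum>i=1..n-1. (-1)^(i-1) * of_nat ((n-1-1) choose (i-1)) * vv n i * vv n (n - 1 + 1 - i)) = (0 :: 'a)"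
    using assms by (intro sum.neutral) (auto simp: vv_def)
  finally show ?thesis by simp
qed

lemma single_pair_minus:
  "Poly_Mapping.single a 1 + Poly_Mapping.single b 1 - Poly_Mapping.single b 1 = Poly_Mapping.single a (1::nat)"
  by (intro poly_mapping_eqI) (auto simp: lookup_add lookup_minus lookup_single when_def)

lemma ev_pdiff_g:
  assumes "even n" "n \<ge> 3"
  shows "ev (vv n) (pdiff (n-1) (f_odd (n-1))) = (1 :: 'a::field_char_0)"
proof -
  let ?c = "\<lambda>i. 1/2 * ((-1)^(i-1) * of_nat ((n-1-1) choose (i-1))) :: 'a"
  let ?a = "\<lambda>i. Poly_Mapping.single i 1 + Poly_Mapping.single (n - 1 + 1 - i) (1::nat)"
  have "ev (vv n) (pdiff (n-1) (f_odd (n-1) :: 'a mpoly)) = (\<Sum>i=1..n-1. Epd (vv n) (n-1) (?a i) (?c i))"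
    by (simp add: ev_pdiff f_odd_sum Epd.H_sum)
  also have "\<dots> = Epd (vv n) (n-1) (?a 1) (?c 1) + Epd (vv n) (n-1) (?a (n-1)) (?c (n-1))"
    using assms by (intro sum_two_ends) (auto simp: Epd_def lookup_add lookup_single when_def)
  also have "?a 1 - Poly_Mapping.single (n-1) 1 = Poly_Mapping.single 1 1"
    using assms by (simp add: single_pair_minus)
  moreover have "?a (n-1) - Poly_Mapping.single (n-1) 1 = Poly_Mapping.single 1 1"
    using assms by (simp add: single_pair_minus add.commute)
  ultimately show ?thesis
    using assms by (simp add: Epd_def lookup_add lookup_single when_def vv_def)
qed

lemma ev_Dder_g:
  assumes "even n" "n \<ge> 3"
  shows "ev (vv n) (Dder n (f_odd (n-1))) = (1 :: 'a::field_char_0)"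
proof -
  have "ev (vv n) (Dder n (f_odd (n-1)) :: 'a mpoly) =
     (\<Sum>j=1..n-1. of_nat (n - j) * vv n (j+1) * ev (vv n) (pdiff j (f_odd (n-1) :: 'a mpoly)))"
    by (simp add: Dder_def)
  also have "\<dots> = (\<Sum>j=1..n-1. if j = n - 1 then ev (vv n) (pdiff (n-1) (f_odd (n-1) :: 'a mpoly)) else 0)"
    using assms by (intro sum.cong) (auto simp: vv_def)
  also have "\<dots> = ev (vv n) (pdiff (n-1) (f_odd (n-1) :: 'a mpoly))"
    using assms by (intro trans[OF sum.delta]) auto
  also have "\<dots> = 1" by (rule ev_pdiff_g[OF assms])
  finally show ?thesis .
qed

lemma ev_fpoly: "n \<ge> 3 \<Longrightarrow> ev (vv n) (fpoly n) = (1 :: 'a::field_char_0)"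
proof (cases "odd n")
  case True
  assume n: "n \<ge> 3"
  have fp: "fpoly n = f_odd n" unfolding fpoly_def by (rule if_P[OF True])
  show ?thesis unfolding fp by (rule ev_f_odd_odd[OF True n])
next
  case False
  assume n: "n \<ge> 3"
  have fp: "fpoly n = Dder n (f_odd (n - 1)) ^ 2 - 2 * Dder n (Dder n (f_odd (n - 1))) * f_odd (n - 1)"
    unfolding fpoly_def by (rule if_not_P[OF False])
  have e: "even n" using False by simp
  show ?thesis unfolding fp ev_diff ev_mult ev_power ev_g[OF e n] ev_Dder_g[OF e n] by simp
qed

lemma fpoly_nonzero: "n \<ge> 3 \<Longrightarrow> fpoly n \<noteq> (0 :: 'a::field_char_0 mpoly)"
proof
  assume n: "n \<ge> 3" and "fpoly n = (0 :: 'a mpoly)"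
  then have "ev (vv n) (fpoly n) = (0::'a)" by simp
  with ev_fpoly[OF n, where 'a='a] show False by simp
qed

lemma tdeg_fpoly: "n \<ge> 3 \<Longrightarrow> tdeg (fpoly n :: 'a::field_char_0 mpoly) = (if odd n then 2 else 4)"
  using tdeg_homog[OF homog_fpoly fpoly_nonzero] .



lemma lex_less_iff: "lex_less a b \<longleftrightarrow> a < b"
  unfolding lex_less_def less_poly_mapping.rep_eq less_fun_def by blast

lemma lead_mon_Max:
  fixes p :: "'a::comm_ring_1 mpoly"
  assumes "p \<noteq> 0"
  shows "lead_mon p = Max (Poly_Mapping.keys p)"
proof -
  let ?K = "Poly_Mapping.keys p"
  let ?M = "Max ?K"
  have fin: "finite ?K" by simp
  have ne: "?K \<noteq> {}" using assms by simp
  have MK: "?M \<in> ?K" using fin ne by (rule Max_in)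
  have Mge: "m \<le> ?M" if "m \<in> ?K" for m using fin that by (rule Max_ge)
  show ?thesis unfolding lead_mon_def
  proof (rule the_equality)
    show "?M \<in> ?K \<and> (\<forall>m'\<in>?K. m' \<noteq> ?M \<longrightarrow> lex_less m' ?M)"
      using MK Mge by (auto simp: lex_less_iff less_le)
  next
    fix m assume m: "m \<in> ?K \<and> (\<forall>m'\<in>?K. m' \<noteq> m \<longrightarrow> lex_less m' m)"
    show "m = ?M"
    proof (rule ccontr)
      assume "m \<noteq> ?M"
      then have "?M < m" using m MK by (auto simp: lex_less_iff)
      moreover have "m \<le> ?M" using m Mge by blast
      ultimately show False by simp
    qed
  qed
qed

lemma minus_plus_single0:
  fixes m :: "nat \<Rightarrow>\<^sub>0 nat"
  shows "m - Poly_Mapping.single i (Poly_Mapping.lookup m i) + Poly_Mapping.single i (Poly_Mapping.lookup m i) = m"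
proof (rule poly_mapping_eqI)
  fix k
  show "Poly_Mapping.lookup (m - Poly_Mapping.single i (Poly_Mapping.lookup m i) + Poly_Mapping.single i (Poly_Mapping.lookup m i)) k = Poly_Mapping.lookup m k"
    by (cases "k = i") (simp_all add: lookup_add lookup_minus lookup_single)
qed

lemma deg_minus_single0:
  fixes m :: "nat \<Rightarrow>\<^sub>0 nat"
  shows "deg (m - Poly_Mapping.single i (Poly_Mapping.lookup m i)) + Poly_Mapping.lookup m i = deg m"
  using deg_add[of "m - Poly_Mapping.single i (Poly_Mapping.lookup m i)" "Poly_Mapping.single i (Poly_Mapping.lookup m i)"]
    minus_plus_single0[of m i] by simp

lemma keys_sum_eq:
  fixes m :: "nat \<Rightarrow>\<^sub>0 nat"
  assumes "Poly_Mapping.keys m \<subseteq> {0..n}"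
  shows "(\<Sum>j\<in>Poly_Mapping.keys m. Poly_Mapping.lookup m j * w j) = (\<Sum>j\<in>{0..n}. Poly_Mapping.lookup m j * w j)"
  using assms by (intro sum.mono_neutral_left) (auto simp: in_keys_iff)


lemma less_M_lookup0:
  fixes m M :: "nat \<Rightarrow>\<^sub>0 nat"
  assumes "m < M"
  shows "Poly_Mapping.lookup m 0 \<le> Poly_Mapping.lookup M 0"
proof -
  from assms obtain k where k: "Poly_Mapping.lookup m k < Poly_Mapping.lookup M k"
    "\<forall>k'<k. Poly_Mapping.lookup m k' = Poly_Mapping.lookup M k'"
    unfolding less_poly_mapping.rep_eq less_fun_def by blast
  show ?thesis
  proof (cases "k = 0")
    case True then show ?thesis using k by simp
  next
    case False then show ?thesis using k by simp
  qed
qed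

lemma top_monomial:
  fixes m :: "nat \<Rightarrow>\<^sub>0 nat"
  assumes n: "n \<ge> 3"
    and keys: "Poly_Mapping.keys m \<subseteq> {0..n}"
    and m0: "Poly_Mapping.lookup m 0 = \<alpha>"
    and dg: "deg m = \<alpha> + \<beta>"
    and wd: "(\<Sum>j\<in>Poly_Mapping.keys m. Poly_Mapping.lookup m j * w2 n j) \<le> (n-2)*\<alpha> + (n-1)*\<beta>"
  shows "m = Poly_Mapping.single 0 \<alpha> + Poly_Mapping.single n \<beta>"
proof -
  let ?l = "Poly_Mapping.lookup m"
  have W: "(\<Sum>j\<in>Poly_Mapping.keys m. ?l j * w2 n j) = ?l 0 * (n-2) + (\<Sum>j=1..n. ?l j * (2*n-j-1))"
    using keys by (simp add: keys_sum_eq sum.atLeast_Suc_atMost w2_def)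
  have Dg: "deg m = ?l 0 + (\<Sum>j=1..n. ?l j)"
    using keys by (simp add: deg_superset[of "{0..n}"] sum.atLeast_Suc_atMost)
  have split: "(\<Sum>j=1..n. ?l j * (2*n-j-1)) = (n-1) * (\<Sum>j=1..n. ?l j) + (\<Sum>j=1..n. ?l j * (n-j))"
  proof -
    have "(\<Sum>j=1..n. ?l j * (2*n-j-1)) = (\<Sum>j=1..n. (n-1) * ?l j + ?l j * (n-j))"
    proof (rule sum.cong)
      fix j assume "j \<in> {1..n}"
      then have "2*n-j-1 = (n-1) + (n-j)" by auto
      then show "?l j * (2*n-j-1) = (n-1) * ?l j + ?l j * (n-j)" by (simp add: algebra_simps)
    qed simp
    then show ?thesis by (simp add: sum.distrib sum_distrib_left)
  qed
  have sb: "(\<Sum>j=1..n. ?l j) = \<beta>" using Dg dg m0 by simp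
  have R0: "(\<Sum>j=1..n. ?l j * (n-j)) = 0"
    using wd W split sb m0 by (simp add: mult.commute)
  have z: "?l j = 0" if "1 \<le> j" "j < n" for j
  proof -
    have "\<forall>a\<in>{1..n}. ?l a * (n-a) = 0" using R0 by simp
    then have "?l j * (n-j) = 0" using that by auto
    then show ?thesis using that by simp
  qed
  have ln: "?l n = \<beta>"
  proof -
    have "(\<Sum>j=1..n. ?l j) = (\<Sum>j=1..n. if j = n then ?l n else 0)"
      by (rule sum.cong) (auto simp: z)
    then show ?thesis using sb n by simp
  qed
  show ?thesis
  proof (rule poly_mapping_eqI)
    fix j
    show "?l j = Poly_Mapping.lookup (Poly_Mapping.single 0 \<alpha> + Poly_Mapping.single n \<beta>) j"
    proof (cases "j = 0 \<or> j = n \<or> (1 \<le> j \<and> j < n)")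
      case True then show ?thesis using m0 ln z n by (auto simp: lookup_add lookup_single)
    next
      case False
      then have "j \<notin> Poly_Mapping.keys m" using keys by auto
      then show ?thesis using False by (simp add: lookup_add lookup_single in_keys_iff)
    qed
  qed
qed


theorem lemma5p4:
  fixes p :: "'a::field_char_0 mpoly" and n \<alpha> \<beta> :: nat
  assumes "n \<ge> 3" and "\<alpha> \<ge> 1" and "\<beta> \<ge> 1"
    and "p \<in> Pset n \<alpha> \<beta>"
  shows "subst_t (fpoly n) p \<noteq> 0
       \<and> tdeg (subst_t (fpoly n) p) = tdeg (fpoly n :: 'a mpoly) * \<alpha> + \<beta>
       \<and> tdeg (subst_t (fpoly n) p) \<ge> 3"
proof -
  define F where "F = (fpoly n :: 'a mpoly)"
  define d where "d = tdeg F"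
  define M :: "nat \<Rightarrow>\<^sub>0 nat" where "M = Poly_Mapping.single 0 \<alpha> + Poly_Mapping.single n \<beta>"
  define K where "K = Poly_Mapping.keys p"
  define D where "D = d * \<alpha> + \<beta>"
  have n3: "n \<ge> 3" by (rule assms(1))
  from assms(4) have vars: "vars_in {0..n} p" and p0: "p \<noteq> 0" and td: "tdeg p \<le> \<alpha> + \<beta>"
    and wd: "wdeg (w2 n) p \<le> (n-2)*\<alpha> + (n-1)*\<beta>" and lm: "lead_mon p = M"
    by (auto simp: Pset_def M_def)
  have F0: "F \<noteq> 0" unfolding F_def using fpoly_nonzero[OF n3] .
  have d2: "d \<ge> 2" unfolding d_def F_def using tdeg_fpoly[OF n3, where 'a='a] by simp
  have finK: "finite K" by (simp add: K_def)
  have MK: "M \<in> K" and Mmax: "\<And>m. m \<in> K \<Longrightarrow> m \<le> M"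
    using lead_mon_Max[OF p0] lm p0 by (auto simp: K_def intro: Max_ge Max_in)
  have lM0: "Poly_Mapping.lookup M 0 = \<alpha>" using n3 by (simp add: M_def lookup_add lookup_single)
  have degK: "deg m \<le> \<alpha> + \<beta>" if "m \<in> K" for m
  proof -
    have "deg m \<le> tdeg p" using that by (simp add: tdeg_eq K_def)
    then show ?thesis using td by simp
  qed
  have wdK: "(\<Sum>j\<in>Poly_Mapping.keys m. Poly_Mapping.lookup m j * w2 n j) \<le> (n-2)*\<alpha> + (n-1)*\<beta>"
    if "m \<in> K" for m
  proof -
    have "(\<Sum>j\<in>Poly_Mapping.keys m. Poly_Mapping.lookup m j * w2 n j) \<le> wdeg (w2 n) p"
      using that unfolding wdeg_def K_def by (intro Max_ge) auto
    then show ?thesis using wd by simp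
  qed
  have keysK: "Poly_Mapping.keys m \<subseteq> {0..n}" if "m \<in> K" for m
    using vars that by (auto simp: vars_in_def K_def)
  define X where "X m = Poly_Mapping.single (m - Poly_Mapping.single 0 (Poly_Mapping.lookup m 0)) (1::'a)" for m :: "nat \<Rightarrow>\<^sub>0 nat"
  define T where "T m = mconst (Poly_Mapping.lookup p m) * F ^ Poly_Mapping.lookup m 0 * X m" for m
  have S: "subst_t F p = (\<Sum>m\<in>K. T m)" by (simp add: subst_t_def T_def X_def K_def)
  have PhiT: "Phi (T m) = monom (mconst (Poly_Mapping.lookup p m)) 0 * Phi F ^ Poly_Mapping.lookup m 0 *
      monom (Poly_Mapping.single (m - Poly_Mapping.single 0 (Poly_Mapping.lookup m 0)) 1)
            (deg m - Poly_Mapping.lookup m 0)" for m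
  proof -
    have "deg (m - Poly_Mapping.single 0 (Poly_Mapping.lookup m 0)) = deg m - Poly_Mapping.lookup m 0"
      using deg_minus_single0[of m 0] by arith
    then show ?thesis by (simp add: T_def X_def)
  qed
  have dF: "degree (Phi F) = d" unfolding d_def by (rule degree_Phi[OF F0])
  have bound: "degree (Phi (T m)) \<le> d * Poly_Mapping.lookup m 0 + (deg m - Poly_Mapping.lookup m 0)" for m
  proof -
    have "degree (Phi (T m)) \<le> degree (monom (mconst (Poly_Mapping.lookup p m)) 0 * Phi F ^ Poly_Mapping.lookup m 0)
        + (deg m - Poly_Mapping.lookup m 0)"
      unfolding PhiT by (rule order.trans[OF degree_mult_le]) (simp add: degree_monom_le)
    also have "degree (monom (mconst (Poly_Mapping.lookup p m)) 0 * Phi F ^ Poly_Mapping.lookup m 0)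
        \<le> 0 + d * Poly_Mapping.lookup m 0"
      by (rule order.trans[OF degree_mult_le], rule add_mono[OF degree_monom_le])
         (metis degree_power_le dF mult.commute)
    finally show ?thesis by simp
  qed
  have strict: "d * Poly_Mapping.lookup m 0 + (deg m - Poly_Mapping.lookup m 0) < D"
    if mK: "m \<in> K" and mM: "m \<noteq> M" for m
  proof -
    let ?m0 = "Poly_Mapping.lookup m 0"
    have "m < M" using Mmax[OF mK] mM by simp
    then have m0le: "?m0 \<le> \<alpha>" using less_M_lookup0 lM0 by metis
    have m0deg: "?m0 \<le> deg m" using deg_minus_single0[of m 0] by simp
    have dm: "deg m \<le> \<alpha> + \<beta>" by (rule degK[OF mK])
    show ?thesis
    proof (cases "?m0 < \<alpha>")
      case True
      have "(d-1) * ?m0 < (d-1) * \<alpha>" using True d2 by simp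
      moreover have "d * ?m0 = (d-1) * ?m0 + ?m0" "d * \<alpha> = (d-1) * \<alpha> + \<alpha>" using d2
        by (simp_all add: algebra_simps)
      ultimately show ?thesis using dm m0deg unfolding D_def by linarith
    next
      case False
      then have e: "?m0 = \<alpha>" using m0le by simp
      have "deg m \<noteq> \<alpha> + \<beta>"
      proof
        assume "deg m = \<alpha> + \<beta>"
        then have "m = M" unfolding M_def
          by (rule top_monomial[OF n3 keysK[OF mK] e _ wdK[OF mK]])
        then show False using mM by simp
      qed
      then have "deg m < \<alpha> + \<beta>" using dm by simp
      then show ?thesis using e m0deg unfolding D_def by simp
    qed
  qed
  have M0: "M - Poly_Mapping.single 0 \<alpha> = Poly_Mapping.single n \<beta>"
    using n3 by (intro poly_mapping_eqI) (auto simp: M_def lookup_add lookup_minus lookup_single when_def)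
  have degM: "deg M = \<alpha> + \<beta>" using n3 by (simp add: M_def deg_add)
  have cM: "Poly_Mapping.lookup p M \<noteq> 0" using MK by (simp add: K_def in_keys_iff)
  have PhiF0: "Phi F \<noteq> 0" using F0 by simp
  have degTM: "degree (Phi (T M)) = D" and TM0: "Phi (T M) \<noteq> 0"
  proof -
    have a: "monom (mconst (Poly_Mapping.lookup p M)) 0 \<noteq> 0" using cM unfolding mconst_def by (metis lookup_single_eq lookup_zero monom_eq_0_iff)
    have b: "Phi F ^ \<alpha> \<noteq> 0" using PhiF0 by simp
    have c: "monom (Poly_Mapping.single (Poly_Mapping.single n \<beta>) (1::'a)) \<beta> \<noteq> 0"
      by (metis lookup_single_eq lookup_zero monom_eq_0_iff one_neq_zero)
    have "Phi (T M) = monom (mconst (Poly_Mapping.lookup p M)) 0 * Phi F ^ \<alpha> *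
        monom (Poly_Mapping.single (Poly_Mapping.single n \<beta>) 1) \<beta>"
      unfolding PhiT lM0 M0 degM by simp
    moreover have "degree (monom (mconst (Poly_Mapping.lookup p M)) 0 * Phi F ^ \<alpha> *
        monom (Poly_Mapping.single (Poly_Mapping.single n \<beta>) (1::'a)) \<beta>) = D"
      using a b c PhiF0 by (simp add: degree_mult_eq degree_power_eq degree_monom_eq dF D_def mult.commute)
    moreover have "monom (mconst (Poly_Mapping.lookup p M)) 0 * Phi F ^ \<alpha> *
        monom (Poly_Mapping.single (Poly_Mapping.single n \<beta>) (1::'a)) \<beta> \<noteq> 0"
      using a b c by simp
    ultimately show "degree (Phi (T M)) = D" "Phi (T M) \<noteq> 0" by simp_all
  qed
  have PS: "Phi (subst_t F p) = Phi (T M) + (\<Sum>m\<in>K - {M}. Phi (T m))"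
    unfolding S Phi_sum using sum.remove[OF finK MK] by simp
  have rest: "coeff (\<Sum>m\<in>K - {M}. Phi (T m)) k = 0" if "k \<ge> D" for k
    unfolding coeff_sum
  proof (rule sum.neutral, rule ballI)
    fix m assume "m \<in> K - {M}"
    then have "degree (Phi (T m)) < k" using bound[of m] strict[of m] that by force
    then show "coeff (Phi (T m)) k = 0" by (rule coeff_eq_0)
  qed
  have cD: "coeff (Phi (subst_t F p)) D \<noteq> 0"
    unfolding PS coeff_add rest[OF order.refl] using TM0 degTM
    by (metis add.right_neutral leading_coeff_0_iff)
  have cgt: "coeff (Phi (subst_t F p)) k = 0" if "k > D" for k
    unfolding PS coeff_add using rest[of k] that degTM coeff_eq_0[of "Phi (T M)" k] by simp
  have degS: "degree (Phi (subst_t F p)) = D"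
  proof (rule antisym)
    show "degree (Phi (subst_t F p)) \<le> D" by (rule degree_le) (auto intro: cgt)
    show "D \<le> degree (Phi (subst_t F p))" by (rule le_degree[OF cD])
  qed
  have S0: "subst_t F p \<noteq> 0" using cD by (metis Phi_eq_0_iff coeff_0)
  have tS: "tdeg (subst_t F p) = D" using degree_Phi[OF S0] degS by simp
  have "d * \<alpha> \<ge> 2 * 1" using d2 assms(2) by (rule mult_mono) simp_all
  then have "D \<ge> 3" using assms(3) unfolding D_def by simp
  then show ?thesis
    using S0 tS unfolding D_def d_def F_def by simp
qed


end
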